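(* For every $N\ge2$ and every $(n_0,\dots,n_N)$ the following hold: (R1) for every integer $0\le k\le n_{\min}$: $d_{(n_0,\dots,n_N)}(k)=d_{(n_0-k,\dots,n_N-k)}(0)$; (R2) for every $i\in\{1,\dots,N-1\}$: $d_{(n_0,\dots,n_N)}(0)=\min_{j}\big[d_{(n_0,\dots,n_i)}(j)+d_{(j,n_{i+1},\dots,n_N)}(0)\big]$, the minimum over integers $0\le j\le\min(n_0,\dots,n_i)$; (R3) for every $i\in\{1,\dots,N-1\}$ and integer $0\le k\le n_{\min}$: $d_{(n_0,\dots,n_N)}(k)=\min_{j}\big[d_{(n_0,\dots,n_i)}(j)+d_{(j,n_{i+1},\dots,n_N)}(k)\big]$, the minimum over integers $k\le j\le\min(n_0,\dots,n_i)$.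
   Context: For a vector $\mathbf n=(n_0,\dots,n_N)$ of positive integers ($N\ge1$), let $\tilde n_0\le\cdots\le\tilde n_N$ be its nondecreasing rearrangement, $n_{\min}=\tilde n_0$, $c_i=1-i+\min_{k'=1,\dots,N}\lfloor(\sum_{l=0}^{k'}\tilde n_l-i)/k'\rfloor$ for $i=1,\dots,n_{\min}$, and $d_{\mathbf n}(k)=\sum_{i=k+1}^{n_{\min}}c_i$ for integers $0\le k\le n_{\min}$ (so $d_{\mathbf n}(n_{\min})=0$). This $d_{\mathbf n}$ is the diversity-multiplexing tradeoff (at integer points) of the $(n_0,\dots,n_N)$ Rayleigh product channel $\mathbf y=\sqrt{\mathsf{SNR}/(n_1\cdots n_N)}\mathbf H_1\cdots\mathbf H_N\mathbf x+\mathbf z$ with independent i.i.d. $\mathcal{CN}(0,1)$ matrices $\mathbf H_i\in\mathbb C^{n_{i-1}\times n_i}$. Convention: if some entry of $\mathbf n$ is $0$, then $d_{\mathbf n}(0)=0$. *)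

theory Defs
  imports Complex_Main
begin

text \<open>A vector (n_0,...,n_N) is a list of naturals of length N+1.
  nmin = smallest entry (= first entry of the nondecreasing rearrangement).\<close>

definition nmin :: "nat list \<Rightarrow> nat" where
  "nmin ns = Min (set ns)"

definition dmt_c :: "nat list \<Rightarrow> nat \<Rightarrow> int" where
  "dmt_c ns i = 1 - int i +
     Min ((\<lambda>k'. \<lfloor>(real_of_int ((\<Sum>l\<le>k'. int (sort ns ! l)) - int i)) / real k'\<rfloor>)
          ` {1..length ns - 1})"

definition dmt :: "nat list \<Rightarrow> nat \<Rightarrow> int" where
  "dmt ns k = (if k = 0 \<and> 0 \<in> set ns then 0
               else (\<Sum>i\<in>{k+1..nmin ns}. dmt_c ns i))"

end

theory Submission
  imports Defs "HOL-Library.Multiset"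
begin

lemma Min_eq_by:
  fixes f :: "'a \<Rightarrow> 'c::linorder" and g :: "'b \<Rightarrow> 'c"
  assumes "finite A" "A \<noteq> {}" "finite B" "B \<noteq> {}"
    and "\<And>a. a\<in>A \<Longrightarrow> \<exists>b\<in>B. g b \<le> f a" and "\<And>b. b\<in>B \<Longrightarrow> \<exists>a\<in>A. f a \<le> g b"
  shows "Min (f`A) = Min (g`B)"
proof (rule antisym)
  show "Min (f`A) \<le> Min (g`B)"
  proof (rule Min.boundedI)
    show "finite (g`B)" using assms by simp
    show "g`B \<noteq> {}" using assms by simp
    fix z assume "z \<in> g`B"
    then obtain b where b: "b\<in>B" "z = g b" by auto
    then obtain a where "a\<in>A" "f a \<le> g b" using assms(6) by blast
    then show "Min (f`A) \<le> z" using b assms(1) by (meson Min_le finite_imageI image_eqI order_trans)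
  qed
  show "Min (g`B) \<le> Min (f`A)"
  proof (rule Min.boundedI)
    show "finite (f`A)" using assms by simp
    show "f`A \<noteq> {}" using assms by simp
    fix z assume "z \<in> f`A"
    then obtain a where a: "a\<in>A" "z = f a" by auto
    then obtain b where "b\<in>B" "g b \<le> f a" using assms(5) by blast
    then show "Min (g`B) \<le> z" using a assms(3) by (meson Min_le finite_imageI image_eqI order_trans)
  qed
qed

lemma init_seg:
  fixes U :: nat
  assumes "\<And>a b. 1 \<le> a \<Longrightarrow> a \<le> b \<Longrightarrow> P b \<Longrightarrow> P a"
  shows "\<exists>L\<le>U. {w\<in>{1..U}. P w} = {1..L}"
proof (induction U)
  case 0 show ?case by auto
next
  case (Suc U)
  then obtain L where L: "L \<le> U" "{w\<in>{1..U}. P w} = {1..L}" by auto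
  show ?case
  proof (cases "P (Suc U)")
    case True
    have "{w\<in>{1..Suc U}. P w} = {1..Suc U}" using assms True by auto
    then show ?thesis by auto
  next
    case False
    have "{w\<in>{1..Suc U}. P w} = {w\<in>{1..U}. P w}" using False by (auto simp: le_Suc_eq)
    then have "{w\<in>{1..Suc U}. P w} = {1..L}" using L by simp
    then show ?thesis using L(1) by (intro exI[of _ L]) auto
  qed
qed

lemma card_init_min:
  assumes "\<And>a b. 1 \<le> a \<Longrightarrow> a \<le> b \<Longrightarrow> P b \<Longrightarrow> P a"
  shows "card {w\<in>{1..U}. P w \<and> w \<le> t} = min (card {w\<in>{1..U}. P w}) t"
proof -
  obtain L where L: "L \<le> U" "{w\<in>{1..U}. P w} = {1..L}" using init_seg[of P U] assms by blast
  have "{w\<in>{1..U}. P w \<and> w \<le> t} = {w\<in>{1..U}. P w} \<inter> {..t}" by auto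
  also have "\<dots> = {1..min L t}" using L(2) by auto
  finally show ?thesis using L(2) by simp
qed

lemma card_sum_ind: "finite W \<Longrightarrow> card {w\<in>W. P w} = (\<Sum>w\<in>W. if P w then 1 else 0)"
  by (simp add: sum.If_cases Int_def)

lemma card_swap:
  assumes "finite I" "finite W"
  shows "(\<Sum>i\<in>I. card {w\<in>W. P i w}) = (\<Sum>w\<in>W. card {i\<in>I. P i w})"
  using assms by (simp add: card_sum_ind sum.swap[of _ I W])

lemma all_le_Suc: "(\<forall>k\<le>Suc n. Q k) \<longleftrightarrow> Q 0 \<and> (\<forall>k\<le>n. Q (Suc k))"
  apply auto
  subgoal for k by (cases k) auto
  done

lemma prefix_need:
  fixes r :: "nat list" and w :: nat and p :: int
  assumes "sorted r" "0 \<le> p"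
  shows "(\<forall>k\<le>length r. (\<Sum>x\<leftarrow>take k r. int w - int x) \<le> p) \<longleftrightarrow> int (\<Sum>x\<leftarrow>r. w - x) \<le> p"
  using assms
proof (induction r arbitrary: p)
  case Nil then show ?case by simp
next
  case (Cons a r)
  have sr: "sorted r" and ar: "\<forall>x\<in>set r. a \<le> x" using Cons.prems(1) by auto
  show ?case
  proof (cases "w \<le> a")
    case True
    have s0: "(\<Sum>x\<leftarrow>a#r. w - x) = 0" using ar True by (auto simp: sum_list_eq_0_iff)
    have r2: "int (\<Sum>x\<leftarrow>a#r. w - x) \<le> p" unfolding s0 using Cons.prems(2) by simp
    have "(\<Sum>x\<leftarrow>take k (a#r). int w - int x) \<le> 0" for k
    proof (rule sum_list_nonpos)
      fix z assume "z \<in> set (map (\<lambda>x. int w - int x) (take k (a#r)))"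
      then show "z \<le> 0"
        using ar True set_take_subset[of k "a#r"] by fastforce
    qed
    then have "\<forall>k\<le>length (a#r). (\<Sum>x\<leftarrow>take k (a#r). int w - int x) \<le> p"
      using Cons.prems(2) by (auto intro: order_trans)
    then show ?thesis using r2 by blast
  next
    case False
    have rhs: "int (\<Sum>x\<leftarrow>a#r. w - x) = (int w - int a) + int (\<Sum>x\<leftarrow>r. w - x)"
      using False by simp
    have lhs: "(\<forall>k\<le>length (a#r). (\<Sum>x\<leftarrow>take k (a#r). int w - int x) \<le> p)
       \<longleftrightarrow> (\<forall>k\<le>length r. (\<Sum>x\<leftarrow>take k r. int w - int x) \<le> p - (int w - int a))"
      using Cons.prems(2) by (simp only: length_Cons all_le_Suc) (auto simp: algebra_simps)
    show ?thesis
    proof (cases "0 \<le> p - (int w - int a)")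
      case True
      have "(int (\<Sum>x\<leftarrow>r. w - x) \<le> p - (int w - int a)) \<longleftrightarrow> int (\<Sum>x\<leftarrow>a#r. w - x) \<le> p"
        unfolding rhs by linarith
      then show ?thesis using Cons.IH[OF sr True] lhs by blast
    next
      case f2: False
      have "\<not> (\<forall>k\<le>length r. (\<Sum>x\<leftarrow>take k r. int w - int x) \<le> p - (int w - int a))"
        using f2 by (auto intro: exI[of _ 0])
      moreover have "\<not> int (\<Sum>x\<leftarrow>a#r. w - x) \<le> p" using rhs f2 by simp
      ultimately show ?thesis using lhs by blast
    qed
  qed
qed

definition nd :: "nat list \<Rightarrow> nat \<Rightarrow> nat" where
  "nd X w = (\<Sum>x\<in>#(mset X - {#nmin X#}). w - x)"

lemma sort_hd_nmin:
  assumes "X \<noteq> []" shows "sort X ! 0 = nmin X"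
proof -
  define s where "s = sort X"
  have ne: "s \<noteq> []" using assms by (metis length_0_conv length_sort s_def)
  have so: "sorted s" and st: "set s = set X" by (auto simp: s_def)
  have "Min (set s) = s ! 0"
  proof (rule Min_eqI)
    show "finite (set s)" by simp
    show "s ! 0 \<in> set s" using ne by simp
    fix y assume "y \<in> set s"
    then show "s ! 0 \<le> y" using so ne by (cases s) auto
  qed
  then show ?thesis using st by (simp add: s_def nmin_def)
qed

lemma mset_tl_sort:
  assumes "X \<noteq> []" shows "mset (tl (sort X)) = mset X - {#nmin X#}"
proof -
  define s where "s = sort X"
  have ne: "s \<noteq> []" using assms by (metis length_0_conv length_sort s_def)
  have "mset s = add_mset (s!0) (mset (tl s))" using ne by (cases s) auto
  then show ?thesis using sort_hd_nmin[OF assms] by (simp add: s_def)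
qed

lemma nd_list:
  assumes "X \<noteq> []" shows "nd X w = (\<Sum>x\<leftarrow>tl (sort X). w - x)"
proof -
  have "sum_mset (image_mset (\<lambda>x. w - x) (mset (tl (sort X)))) = (\<Sum>x\<leftarrow>tl (sort X). w - x)"
    by (metis mset_map sum_mset_sum_list)
  then show ?thesis unfolding nd_def using mset_tl_sort[OF assms] by simp
qed

lemma nmin_le: "x \<in> set X \<Longrightarrow> nmin X \<le> x"
  by (simp add: nmin_def)

lemma nd_zero: "w \<le> nmin X \<Longrightarrow> nd X w = 0"
proof -
  assume w: "w \<le> nmin X"
  have "\<forall>x\<in>#(mset X - {#nmin X#}). w - x = 0"
  proof
    fix x assume "x \<in># mset X - {#nmin X#}"
    then have "x \<in># mset X" by (rule in_diffD)
    then have "x \<in> set X" by simp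
    then show "w - x = 0" using w nmin_le[of x X] by simp
  qed
  then show ?thesis unfolding nd_def by (simp add: sum_mset.neutral)
qed

lemma nd_mono: "a \<le> b \<Longrightarrow> nd X a \<le> nd X b"
  unfolding nd_def by (intro sum_mset_mono) auto

lemma prefix_sum_sort:
  assumes "X \<noteq> []" "k < length X"
  shows "(\<Sum>l\<le>k. int (sort X ! l)) = int (nmin X) + (\<Sum>x\<leftarrow>take k (tl (sort X)). int x)"
  using assms(2)
proof (induction k)
  case 0 then show ?case using sort_hd_nmin[OF assms(1)] by simp
next
  case (Suc k)
  have "take (Suc k) (tl (sort X)) = take k (tl (sort X)) @ [tl (sort X) ! k]"
    using Suc.prems by (simp add: take_Suc_conv_app_nth)
  moreover have "tl (sort X) ! k = sort X ! Suc k" using Suc.prems by (simp add: nth_tl)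
  ultimately show ?case using Suc by simp
qed

lemma floor_char:
  assumes "0 < k"
  shows "z \<le> \<lfloor>real_of_int A / real k\<rfloor> \<longleftrightarrow> z * int k \<le> A"
proof -
  have "z \<le> \<lfloor>real_of_int A / real k\<rfloor> \<longleftrightarrow> real_of_int z * real k \<le> real_of_int A"
    using assms by (simp add: le_floor_iff pos_le_divide_eq)
  also have "\<dots> \<longleftrightarrow> real_of_int (z * int k) \<le> real_of_int A" by simp
  also have "\<dots> \<longleftrightarrow> z * int k \<le> A" by (rule of_int_le_iff)
  finally show ?thesis .
qed

lemma sum_take_diff:
  "(\<Sum>x\<leftarrow>xs. int w - int x) = int (length xs) * int w - (\<Sum>x\<leftarrow>xs. int x)"
  by (induction xs) (auto simp: algebra_simps)

lemma c_lev:
  assumes len: "2 \<le> length X" and i: "1 \<le> i" "i \<le> nmin X"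
    and U: "\<And>w. U < w \<Longrightarrow> nmin X < nd X w"
  shows "dmt_c X i = int (card {w\<in>{1..U}. nd X w \<le> nmin X - i}) - int i + 1"
proof -
  define s where "s = sort X"
  define m where "m = nmin X"
  define N where "N = length X - 1"
  define T where "T = Min ((\<lambda>k'. \<lfloor>real_of_int ((\<Sum>l\<le>k'. int (s ! l)) - int i) / real k'\<rfloor>) ` {1..N})"
  have Xne: "X \<noteq> []" using len by auto
  have N1: "1 \<le> N" using len by (simp add: N_def)
  have ls: "length (tl s) = N" by (simp add: s_def N_def)
  have cT: "dmt_c X i = 1 - int i + T" by (simp add: dmt_c_def T_def s_def N_def)
  have key: "int w \<le> T \<longleftrightarrow> nd X w \<le> m - i" for w :: nat
  proof -
    have "int w \<le> T \<longleftrightarrow> (\<forall>k'\<in>{1..N}. int w \<le> \<lfloor>real_of_int ((\<Sum>l\<le>k'. int (s ! l)) - int i) / real k'\<rfloor>)"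
      unfolding T_def using N1 by (subst Min_ge_iff) auto
    also have "\<dots> \<longleftrightarrow> (\<forall>k'\<in>{1..N}. (\<Sum>x\<leftarrow>take k' (tl s). int w - int x) \<le> int m - int i)"
    proof (intro ball_cong refl)
      fix k' assume k': "k' \<in> {1..N}"
      have lt: "length (take k' (tl s)) = k'" using k' ls by simp
      have kl: "k' < length X" using k' len N_def by auto
      have ps: "(\<Sum>l\<le>k'. int (s ! l)) = int m + (\<Sum>x\<leftarrow>take k' (tl s). int x)"
        unfolding s_def m_def using prefix_sum_sort[OF Xne kl] by simp
      show "int w \<le> \<lfloor>real_of_int ((\<Sum>l\<le>k'. int (s ! l)) - int i) / real k'\<rfloor>
            \<longleftrightarrow> (\<Sum>x\<leftarrow>take k' (tl s). int w - int x) \<le> int m - int i"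
      proof -
        have "int w \<le> \<lfloor>real_of_int ((\<Sum>l\<le>k'. int (s ! l)) - int i) / real k'\<rfloor>
            \<longleftrightarrow> int w * int k' \<le> (\<Sum>l\<le>k'. int (s ! l)) - int i"
          using k' by (intro floor_char) auto
        also have "\<dots> \<longleftrightarrow> (\<Sum>x\<leftarrow>take k' (tl s). int w - int x) \<le> int m - int i"
          unfolding ps sum_take_diff lt by (simp add: algebra_simps)
        finally show ?thesis .
      qed
    qed
    also have "\<dots> \<longleftrightarrow> (\<forall>k'\<le>length (tl s). (\<Sum>x\<leftarrow>take k' (tl s). int w - int x) \<le> int m - int i)"
      (is "(\<forall>k'\<in>{1..N}. ?Q k') \<longleftrightarrow> _")
    proof (intro iffI allI impI ballI)
      fix k' assume A: "\<forall>k'\<in>{1..N}. ?Q k'" and k': "k' \<le> length (tl s)"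
      show "?Q k'"
      proof (cases "k' = 0")
        case True then show ?thesis using i by (simp add: m_def)
      next
        case False then show ?thesis using A k' ls by auto
      qed
    next
      fix k' assume A: "\<forall>k'\<le>length (tl s). ?Q k'" and "k' \<in> {1..N}"
      then show "?Q k'" using ls by auto
    qed
    also have "\<dots> \<longleftrightarrow> int (\<Sum>x\<leftarrow>tl s. w - x) \<le> int m - int i"
      using i by (intro prefix_need) (auto simp: s_def m_def sorted_tl)
    also have "\<dots> \<longleftrightarrow> nd X w \<le> m - i"
      using i nd_list[OF Xne] by (simp add: s_def m_def of_nat_diff[symmetric] del: of_nat_diff)
    finally show ?thesis .
  qed
  have "nd X 1 = 0" using i by (intro nd_zero) simp
  then have T1: "1 \<le> T" using key[of 1] by simp
  have "{w\<in>{1..U}. nd X w \<le> m - i} = {1..nat T}"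
  proof (intro set_eqI iffI)
    fix w assume "w \<in> {w\<in>{1..U}. nd X w \<le> m - i}"
    then show "w \<in> {1..nat T}" using key[of w] by auto
  next
    fix w assume w: "w \<in> {1..nat T}"
    then have "nd X w \<le> m - i" using key[of w] T1 by auto
    moreover have "w \<le> U" using U[of w] \<open>nd X w \<le> m - i\<close> by (metis diff_le_self le_trans m_def not_le)
    ultimately show "w \<in> {w\<in>{1..U}. nd X w \<le> m - i}" using w by auto
  qed
  then show ?thesis using cT T1 by (simp add: m_def)
qed

lemma dmt_sum: "dmt X k = (\<Sum>i\<in>{k+1..nmin X}. dmt_c X i)"
proof (cases "k = 0 \<and> 0 \<in> set X")
  case True
  then have "nmin X = 0" using nmin_le[of 0 X] by simp
  then show ?thesis using True by (simp add: dmt_def)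
next
  case False then show ?thesis unfolding dmt_def by auto
qed

lemma c_mono:
  assumes "2 \<le> length X" "i \<le> i'"
  shows "dmt_c X i' \<le> dmt_c X i - int (i' - i)"
proof -
  define f where "f j k' = \<lfloor>real_of_int ((\<Sum>l\<le>k'. int (sort X ! l)) - int j) / real k'\<rfloor>" for j k'
  define A where "A = {1..length X - 1}"
  have A: "finite A" "A \<noteq> {}" using assms by (auto simp: A_def)
  have "Min (f i' ` A) \<le> Min (f i ` A)"
  proof (rule Min.boundedI)
    show "finite (f i ` A)" "f i ` A \<noteq> {}" using A by auto
    fix z assume "z \<in> f i ` A"
    then obtain a where a: "a \<in> A" "z = f i a" by auto
    have "f i' a \<le> f i a" unfolding f_def
      using assms(2) by (intro floor_mono divide_right_mono) auto
    then show "Min (f i' ` A) \<le> z" using a A by (meson Min_le finite_imageI image_eqI order_trans)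
  qed
  then show ?thesis using assms(2) by (simp add: dmt_c_def f_def A_def)
qed

lemma nmin_map:
  assumes "X \<noteq> []" shows "nmin (map (\<lambda>x. x - k) X) = nmin X - k"
proof -
  have "mono (\<lambda>x::nat. x - k)" by (auto intro: monoI)
  then have "(\<lambda>x. x - k) (Min (set X)) = Min ((\<lambda>x. x - k) ` set X)"
    using assms by (intro mono_Min_commute) auto
  then show ?thesis by (simp add: nmin_def)
qed

lemma sort_map_sub: "sort (map (\<lambda>x::nat. x - k) X) = map (\<lambda>x. x - k) (sort X)"
proof (rule properties_for_sort)
  show "mset (map (\<lambda>x. x - k) (sort X)) = mset (map (\<lambda>x. x - k) X)" by simp
  have "sorted (sort X)" by simp
  then show "sorted (map (\<lambda>x. x - k) (sort X))"
    by (rule sorted_map_mono) (auto intro!: mono_onI diff_le_mono)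
qed

lemma c_shift:
  assumes len: "2 \<le> length X" and k: "k \<le> nmin X" "k < i"
  shows "dmt_c X i = dmt_c (map (\<lambda>x. x - k) X) (i - k)"
proof -
  define s where "s = sort X"
  define f where "f k' = \<lfloor>real_of_int ((\<Sum>l\<le>k'. int (s ! l)) - int i) / real k'\<rfloor>" for k'
  define f' where "f' k' = \<lfloor>real_of_int ((\<Sum>l\<le>k'. int (map (\<lambda>x. x - k) s ! l)) - int (i - k)) / real k'\<rfloor>" for k'
  define A where "A = {1..length X - 1}"
  have A: "finite A" "A \<noteq> {}" using len by (auto simp: A_def)
  have ls: "length s = length X" by (simp add: s_def)
  have ff: "f' k' = f k' - int k" if "k' \<in> A" for k'
  proof -
    have "(\<Sum>l\<le>k'. int (map (\<lambda>x. x - k) s ! l)) = (\<Sum>l\<le>k'. int (s ! l) - int k)"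
    proof (rule sum.cong[OF refl])
      fix l assume "l \<in> {..k'}"
      then have l: "l < length s" using that ls by (auto simp: A_def)
      then have "s ! l \<in> set X" by (metis nth_mem s_def set_sort)
      then have "k \<le> s ! l" using k nmin_le[of "s!l" X] by simp
      then show "int (map (\<lambda>x. x - k) s ! l) = int (s ! l) - int k" using l by simp
    qed
    also have "\<dots> = (\<Sum>l\<le>k'. int (s ! l)) - (int k' + 1) * int k"
      by (simp add: sum_subtractf algebra_simps)
    finally have e: "(\<Sum>l\<le>k'. int (map (\<lambda>x. x - k) s ! l)) - int (i - k)
        = ((\<Sum>l\<le>k'. int (s ! l)) - int i) - int k' * int k" using k by (simp add: algebra_simps of_nat_diff)
    have kp: "0 < k'" using that by (auto simp: A_def)
    have "real_of_int (((\<Sum>l\<le>k'. int (s ! l)) - int i) - int k' * int k) / real k'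
        = real_of_int ((\<Sum>l\<le>k'. int (s ! l)) - int i) / real k' - real_of_int (int k)"
      using kp by (simp add: field_simps)
    then show ?thesis unfolding f'_def f_def e by (metis floor_diff_of_int)
  qed
  have mono: "mono (\<lambda>z::int. z - int k)" by (auto intro: monoI)
  have "Min (f' ` A) = Min ((\<lambda>z. z - int k) ` (f ` A))"
    using ff by (simp add: image_image)
  also have "\<dots> = Min (f ` A) - int k"
    using mono A by (simp add: mono_Min_commute[symmetric])
  finally have "Min (f' ` A) = Min (f ` A) - int k" .
  moreover have "dmt_c X i = 1 - int i + Min (f ` A)" by (simp add: dmt_c_def f_def A_def s_def)
  moreover have "dmt_c (map (\<lambda>x. x - k) X) (i - k) = 1 - int (i - k) + Min (f' ` A)"
    by (simp add: dmt_c_def f'_def A_def s_def sort_map_sub)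
  ultimately show ?thesis using k by simp
qed

lemma R1:
  assumes len: "2 \<le> length X" and k: "k \<le> nmin X"
  shows "dmt X k = dmt (map (\<lambda>x. x - k) X) 0"
proof -
  have Xne: "X \<noteq> []" using len by auto
  have nm: "nmin (map (\<lambda>x. x - k) X) = nmin X - k" by (rule nmin_map[OF Xne])
  have "dmt X k = (\<Sum>i\<in>{k+1..nmin X}. dmt_c X i)" by (rule dmt_sum)
  also have "\<dots> = (\<Sum>i\<in>{1+k..(nmin X - k)+k}. dmt_c X i)" using k by simp
  also have "\<dots> = (\<Sum>i\<in>{1..nmin X - k}. dmt_c X (i + k))" by (rule sum.shift_bounds_cl_nat_ivl)
  also have "\<dots> = (\<Sum>i\<in>{1..nmin X - k}. dmt_c (map (\<lambda>x. x - k) X) i)"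
  proof (rule sum.cong[OF refl])
    fix i assume "i \<in> {1..nmin X - k}"
    then show "dmt_c X (i + k) = dmt_c (map (\<lambda>x. x - k) X) i"
      using c_shift[OF len k, of "i+k"] by simp
  qed
  also have "\<dots> = dmt (map (\<lambda>x. x - k) X) 0" using dmt_sum[of "map (\<lambda>x. x - k) X" 0] nm by simp
  finally show ?thesis .
qed

lemma c_pair:
  assumes "1 \<le> i" shows "dmt_c [a,b] i = int a + int b + 1 - 2 * int i"
proof -
  have "sort [a,b] ! 0 + sort [a,b] ! 1 = a + b"
    by (cases "a \<le> b") auto
  have fl: "\<lfloor>real a + real b - real i\<rfloor> = int a + int b - int i"
  proof -
    have "real a + real b - real i = real_of_int (int a + int b - int i)" by simp
    then show ?thesis by (simp only: floor_of_int)
  qed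
  have fl': "\<lfloor>real b + real a - real i\<rfloor> = int a + int b - int i" using fl by (simp add: add.commute)
  show ?thesis using fl fl' by (cases "a \<le> b") (auto simp: dmt_c_def)
qed

lemma pair_sum: "(\<Sum>i\<in>{1..n}. int a + int b + 1 - 2 * int i) = int n * (int a + int b) - int n * int n"
  by (induction n) (auto simp: algebra_simps)

lemma F3: "dmt [a,b] 0 = int a * int b"
proof -
  have nm: "nmin [a,b] = min a b" by (simp add: nmin_def)
  have "dmt [a,b] 0 = (\<Sum>i\<in>{1..min a b}. dmt_c [a,b] i)" using dmt_sum[of "[a,b]" 0] nm by simp
  also have "\<dots> = (\<Sum>i\<in>{1..min a b}. int a + int b + 1 - 2 * int i)"
    by (rule sum.cong) (auto simp: c_pair)
  also have "\<dots> = int a * int b" unfolding pair_sum by (cases "a \<le> b") (auto simp: algebra_simps min_def)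
  finally show ?thesis .
qed

lemma sum_shape: "(\<Sum>i\<in>I. int (f i) - int i + 1) = int (sum f I) - (\<Sum>i\<in>I. int i - 1)"
  by (simp add: sum.distrib sum_subtractf algebra_simps)

lemma B2:
  assumes len: "2 \<le> length X"
  shows "Min ((\<lambda>j. dmt X j + int j * int y) ` {0..nmin X}) = (\<Sum>i\<in>{1..nmin X}. min (dmt_c X i) (int y))"
proof -
  define m where "m = nmin X"
  define c where "c = dmt_c X"
  have cm: "c i' \<le> c i" if "i \<le> i'" for i i' using c_mono[OF len that] unfolding c_def by linarith
  have f: "dmt X j + int j * int y = (\<Sum>i\<in>{1..m}. if i \<le> j then int y else c i)" if "j \<le> m" for j
  proof -
    have u: "{1..m} = {1..j} \<union> {j+1..m}" using that by auto
    have "(\<Sum>i\<in>{1..m}. if i \<le> j then int y else c i)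
        = (\<Sum>i\<in>{1..j}. if i \<le> j then int y else c i) + (\<Sum>i\<in>{j+1..m}. if i \<le> j then int y else c i)"
      unfolding u by (rule sum.union_disjoint) auto
    also have "\<dots> = int j * int y + (\<Sum>i\<in>{j+1..m}. c i)" by simp
    finally show ?thesis using dmt_sum[of X j] by (simp add: m_def c_def)
  qed
  have "\<exists>L\<le>m. {i\<in>{1..m}. int y < c i} = {1..L}"
  proof (rule init_seg)
    fix a b assume "1 \<le> a" "a \<le> b" "int y < c b"
    then show "int y < c a" using cm[of a b] by linarith
  qed
  then obtain L where L: "L \<le> m" "{i\<in>{1..m}. int y < c i} = {1..L}" by blast
  have eqL: "(\<Sum>i\<in>{1..m}. if i \<le> L then int y else c i) = (\<Sum>i\<in>{1..m}. min (c i) (int y))"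
  proof (rule sum.cong[OF refl])
    fix i assume i: "i \<in> {1..m}"
    have "i \<in> {i\<in>{1..m}. int y < c i} \<longleftrightarrow> i \<in> {1..L}" using L(2) by simp
    then have "i \<le> L \<longleftrightarrow> int y < c i" using i by simp
    then show "(if i \<le> L then int y else c i) = min (c i) (int y)" by auto
  qed
  show ?thesis
  proof (rule Min_eqI)
    show "finite ((\<lambda>j. dmt X j + int j * int y) ` {0..nmin X})" by simp
    fix z assume "z \<in> (\<lambda>j. dmt X j + int j * int y) ` {0..nmin X}"
    then obtain j where j: "j \<le> m" "z = dmt X j + int j * int y" by (auto simp: m_def)
    have "(\<Sum>i\<in>{1..m}. min (c i) (int y)) \<le> (\<Sum>i\<in>{1..m}. if i \<le> j then int y else c i)"
      by (rule sum_mono) auto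
    then show "(\<Sum>i\<in>{1..nmin X}. min (dmt_c X i) (int y)) \<le> z" using f[OF j(1)] j by (simp add: m_def c_def)
  next
    have eq: "dmt X L + int L * int y = (\<Sum>i\<in>{1..nmin X}. min (dmt_c X i) (int y))"
      using f[OF L(1)] eqL by (simp add: m_def c_def)
    have Lin: "L \<in> {0..nmin X}" using L(1) by (simp add: m_def)
    show "(\<Sum>i\<in>{1..nmin X}. min (dmt_c X i) (int y)) \<in> (\<lambda>j. dmt X j + int j * int y) ` {0..nmin X}"
      by (rule image_eqI[where f="\<lambda>j. dmt X j + int j * int y" and x=L, OF eq[symmetric] Lin])
  qed
qed

lemma cnt1: "card {i\<in>{1..m::nat}. a + (w - y) \<le> m - i} = card {i\<in>{1..m}. a \<le> m - i \<and> w \<le> y + i - 1}"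
proof -
  have "{i\<in>{1..m}. a + (w - y) \<le> m - i} = {1..m - (a + (w-y))}" by (rule set_eqI) (simp, arith)
  moreover have "{i\<in>{1..m}. a \<le> m - i \<and> w \<le> y + i - 1} = {(w-y)+1..m - a}" by (rule set_eqI) (simp, arith)
  ultimately show ?thesis by simp
qed

lemma cnt2:
  assumes "y < m" "m < w"
  shows "card {i\<in>{1..y::nat}. a + (w - m) \<le> y - i} = card {i\<in>{1..m}. a \<le> m - i \<and> w \<le> y + i - 1}"
proof -
  have "{i\<in>{1..y}. a + (w - m) \<le> y - i} = {1..y - (a + (w-m))}" by (rule set_eqI) (simp, arith)
  moreover have "{i\<in>{1..m}. a \<le> m - i \<and> w \<le> y + i - 1} = {(w-y)+1..m - a}" by (rule set_eqI) (simp, arith)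
  ultimately show ?thesis using assms by simp
qed

lemma cnt3:
  assumes "y < m" "1 \<le> w" "w \<le> m"
  shows "card {i\<in>{1..y::nat}. 0 + (w - m) \<le> y - i} = y"
    and "card {i\<in>{1..m}. 0 \<le> m - i \<and> w \<le> y + i - 1} = m - (w - y)"
proof -
  have "{i\<in>{1..y}. 0 + (w - m) \<le> y - i} = {1..y}" using assms by (intro set_eqI) auto
  then show "card {i\<in>{1..y::nat}. 0 + (w - m) \<le> y - i} = y" by simp
  have "{i\<in>{1..m}. 0 \<le> m - i \<and> w \<le> y + i - 1} = {(w-y)+1..m}" using assms by (intro set_eqI) (simp, arith)
  then show "card {i\<in>{1..m}. 0 \<le> m - i \<and> w \<le> y + i - 1} = m - (w - y)" by simp
qed

lemma arith_id:
  assumes "y \<le> m"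
  shows "int (\<Sum>w\<in>{1..m}. m - (w - y)) = int m * int y + (\<Sum>i\<in>{1..m}. int i - 1) - (\<Sum>i\<in>{1..y}. int i - 1)"
  using assms
proof (induction m rule: dec_induct)
  case base
  have "(\<Sum>w\<in>{1..y}. y - (w - y)) = (\<Sum>w\<in>{1..y}. y)" by (rule sum.cong) auto
  then show ?case by simp
next
  case (step n)
  have a: "(\<Sum>w\<in>{1..Suc n}. Suc n - (w - y)) = (\<Sum>w\<in>{1..n}. Suc n - (w - y)) + (Suc n - (Suc n - y))"
    by simp
  have b: "(\<Sum>w\<in>{1..n}. Suc n - (w - y)) = (\<Sum>w\<in>{1..n}. (n - (w - y)) + 1)"
    by (rule sum.cong) auto
  have c: "(\<Sum>w\<in>{1..n}. (n - (w - y)) + 1) = (\<Sum>w\<in>{1..n}. n - (w - y)) + n"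
    by (subst sum.distrib) simp
  have d: "Suc n - (Suc n - y) = y" using step by simp
  have "(\<Sum>w\<in>{1..Suc n}. Suc n - (w - y)) = (\<Sum>w\<in>{1..n}. n - (w - y)) + n + y"
    unfolding a b c d by simp
  then show ?case using step by (simp add: algebra_simps)
qed

lemma nmin_in: "X \<noteq> [] \<Longrightarrow> nmin X \<in> set X" by (simp add: nmin_def)

lemma nmin_snoc: "X \<noteq> [] \<Longrightarrow> nmin (X @ [y]) = min (nmin X) y"
  by (simp add: nmin_def Min_insert min.commute)

lemma nd_ge:
  assumes "2 \<le> length X" shows "w - Max (set X) \<le> nd X w"
proof -
  have Xne: "X \<noteq> []" using assms by auto
  have "nmin X \<in># mset X" using nmin_in[OF Xne] by simp
  then have "size (mset X - {#nmin X#}) = length X - 1" by (simp add: size_Diff_singleton)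
  then have "mset X - {#nmin X#} \<noteq> {#}" using assms by auto
  then obtain x0 where x0: "x0 \<in># mset X - {#nmin X#}" by blast
  then obtain R' where R': "mset X - {#nmin X#} = add_mset x0 R'" by (metis multi_member_split)
  have "x0 \<in># mset X" using x0 by (rule in_diffD)
  then have "x0 \<le> Max (set X)" by simp
  moreover have "nd X w = (w - x0) + (\<Sum>x\<in>#R'. w - x)" unfolding nd_def R' by simp
  ultimately show ?thesis by linarith
qed

lemma min_arith: "1 \<le> i \<Longrightarrow> min (int C - int i + 1) (int y) = int (min C (y + i - 1)) - int i + 1"
  by (cases "C \<le> y + i - 1") (auto simp: min_def)

lemma B1:
  assumes len: "2 \<le> length X"
  shows "dmt (X @ [y]) 0 = (\<Sum>i\<in>{1..nmin X}. min (dmt_c X i) (int y))"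
proof -
  define m where "m = nmin X"
  define V where "V = X @ [y]"
  define U where "U = m + Max (set X)"
  have Xne: "X \<noteq> []" using len by auto
  have lenV: "2 \<le> length V" using len by (simp add: V_def)
  have mX: "m \<in># mset X" using nmin_in[OF Xne] by (simp add: m_def)
  have ndU: "m < nd X w" if "U < w" for w using nd_ge[OF len, of w] that by (simp add: U_def m_def)
  have Ugm: "m \<le> U" by (simp add: U_def)
  have cX: "dmt_c X i = int (card {w\<in>{1..U}. nd X w \<le> m - i}) - int i + 1" if "i \<in> {1..m}" for i
    using c_lev[OF len, of i U] that ndU by (simp add: m_def)
  have minX: "min (dmt_c X i) (int y) = int (card {w\<in>{1..U}. nd X w \<le> m - i \<and> w \<le> y + i - 1}) - int i + 1"
    if i: "i \<in> {1..m}" for i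
  proof -
    have "card {w\<in>{1..U}. nd X w \<le> m - i \<and> w \<le> y + i - 1} = min (card {w\<in>{1..U}. nd X w \<le> m - i}) (y + i - 1)"
      by (rule card_init_min) (meson nd_mono order_trans)
    then show ?thesis using cX[OF i] i min_arith[of i] by auto
  qed
  have RHS: "(\<Sum>i\<in>{1..m}. min (dmt_c X i) (int y))
      = int (\<Sum>i\<in>{1..m}. card {w\<in>{1..U}. nd X w \<le> m - i \<and> w \<le> y + i - 1}) - (\<Sum>i\<in>{1..m}. int i - 1)"
    unfolding sum_shape[symmetric] by (rule sum.cong[OF refl]) (rule minX)
  have swap2: "(\<Sum>i\<in>{1..m}. card {w\<in>{1..U}. nd X w \<le> m - i \<and> w \<le> y + i - 1})
      = (\<Sum>w\<in>{1..U}. card {i\<in>{1..m}. nd X w \<le> m - i \<and> w \<le> y + i - 1})" by (rule card_swap) auto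
  show ?thesis
  proof (cases "m \<le> y")
    case True
    have nV: "nmin V = m" using nmin_snoc[OF Xne] True by (simp add: V_def m_def)
    obtain A' where A': "mset X = add_mset m A'" using mX by (metis multi_member_split)
    have msV: "mset V - {#m#} = (mset X - {#m#}) + {#y#}" unfolding V_def using A'
      by (simp add: add_mset_commute)
    have ndV: "nd V w = nd X w + (w - y)" for w unfolding nd_def nV msV by (simp add: m_def)
    have cV: "dmt_c V i = int (card {w\<in>{1..U}. nd X w + (w - y) \<le> m - i}) - int i + 1" if "i \<in> {1..m}" for i
    proof -
      have "\<And>w. U < w \<Longrightarrow> nmin V < nd V w" using ndU nV ndV by fastforce
      then show ?thesis using c_lev[OF lenV, of i U] that nV ndV by simp
    qed
    have "dmt V 0 = (\<Sum>i\<in>{1..m}. dmt_c V i)" using dmt_sum[of V 0] nV by simp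
    also have "\<dots> = int (\<Sum>i\<in>{1..m}. card {w\<in>{1..U}. nd X w + (w - y) \<le> m - i}) - (\<Sum>i\<in>{1..m}. int i - 1)"
      unfolding sum_shape[symmetric] by (rule sum.cong[OF refl]) (rule cV)
    also have "(\<Sum>i\<in>{1..m}. card {w\<in>{1..U}. nd X w + (w - y) \<le> m - i})
        = (\<Sum>w\<in>{1..U}. card {i\<in>{1..m}. nd X w + (w - y) \<le> m - i})" by (rule card_swap) auto
    also have "\<dots> = (\<Sum>w\<in>{1..U}. card {i\<in>{1..m}. nd X w \<le> m - i \<and> w \<le> y + i - 1})"
      by (rule sum.cong[OF refl]) (rule cnt1)
    finally have "dmt V 0 = int (\<Sum>w\<in>{1..U}. card {i\<in>{1..m}. nd X w \<le> m - i \<and> w \<le> y + i - 1}) - (\<Sum>i\<in>{1..m}. int i - 1)" .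
    then have "dmt V 0 = (\<Sum>i\<in>{1..m}. min (dmt_c X i) (int y))" unfolding RHS swap2 .
    then show ?thesis unfolding V_def m_def .
  next
    case False
    then have ym: "y < m" by simp
    have nV: "nmin V = y" using nmin_snoc[OF Xne] ym by (simp add: V_def m_def)
    have msV: "mset V - {#y#} = mset X" by (simp add: V_def)
    have ndV: "nd V w = nd X w + (w - m)" for w
    proof -
      have "mset X = add_mset m (mset X - {#m#})" using mX by simp
      then have "(\<Sum>x\<in>#mset X. w - x) = (w - m) + (\<Sum>x\<in>#mset X - {#m#}. w - x)"
        by (metis image_mset_add_mset sum_mset.insert)
      then show ?thesis unfolding nd_def nV msV by (simp add: m_def)
    qed
    have cV: "dmt_c V i = int (card {w\<in>{1..U}. nd X w + (w - m) \<le> y - i}) - int i + 1" if "i \<in> {1..y}" for i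
    proof -
      have "\<And>w. U < w \<Longrightarrow> nmin V < nd V w" using ndU nV ndV ym by fastforce
      then show ?thesis using c_lev[OF lenV, of i U] that nV ndV by simp
    qed
    define A where "A w = card {i\<in>{1..y}. nd X w + (w - m) \<le> y - i}" for w
    define B where "B w = card {i\<in>{1..m}. nd X w \<le> m - i \<and> w \<le> y + i - 1}" for w
    have u: "{1..U} = {1..m} \<union> {m+1..U}" using Ugm by auto
    have sA: "(\<Sum>w\<in>{1..U}. A w) = (\<Sum>w\<in>{1..m}. A w) + (\<Sum>w\<in>{m+1..U}. A w)"
      unfolding u by (rule sum.union_disjoint) auto
    have sB: "(\<Sum>w\<in>{1..U}. B w) = (\<Sum>w\<in>{1..m}. B w) + (\<Sum>w\<in>{m+1..U}. B w)"
      unfolding u by (rule sum.union_disjoint) auto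
    have AB: "(\<Sum>w\<in>{m+1..U}. A w) = (\<Sum>w\<in>{m+1..U}. B w)"
      unfolding A_def B_def by (rule sum.cong[OF refl]) (rule cnt2, use ym in auto)
    have A1: "(\<Sum>w\<in>{1..m}. A w) = m * y"
    proof -
      have "(\<Sum>w\<in>{1..m}. A w) = (\<Sum>w\<in>{1..m}. y)"
      proof (rule sum.cong[OF refl])
        fix w assume w: "w \<in> {1..m}"
        then have "nd X w = 0" by (intro nd_zero) (auto simp: m_def)
        then show "A w = y" unfolding A_def using cnt3(1)[OF ym, of w] w by simp
      qed
      then show ?thesis by simp
    qed
    have B1: "(\<Sum>w\<in>{1..m}. B w) = (\<Sum>w\<in>{1..m}. m - (w - y))"
    proof (rule sum.cong[OF refl])
      fix w assume w: "w \<in> {1..m}"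
      then have "nd X w = 0" by (intro nd_zero) (auto simp: m_def)
      then show "B w = m - (w - y)" unfolding B_def using cnt3(2)[OF ym, of w] w by simp
    qed
    have "dmt V 0 = (\<Sum>i\<in>{1..y}. dmt_c V i)" using dmt_sum[of V 0] nV by simp
    also have "\<dots> = int (\<Sum>i\<in>{1..y}. card {w\<in>{1..U}. nd X w + (w - m) \<le> y - i}) - (\<Sum>i\<in>{1..y}. int i - 1)"
      unfolding sum_shape[symmetric] by (rule sum.cong[OF refl]) (rule cV)
    also have "(\<Sum>i\<in>{1..y}. card {w\<in>{1..U}. nd X w + (w - m) \<le> y - i}) = (\<Sum>w\<in>{1..U}. A w)"
      unfolding A_def by (rule card_swap) auto
    finally have L0: "dmt V 0 = int (\<Sum>w\<in>{1..U}. A w) - (\<Sum>i\<in>{1..y}. int i - 1)" .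
    have sA': "(\<Sum>w\<in>{1..U}. A w) = m * y + (\<Sum>w\<in>{m+1..U}. B w)" using sA A1 AB by simp
    have L: "dmt V 0 = int (m * y + (\<Sum>w\<in>{m+1..U}. B w)) - (\<Sum>i\<in>{1..y}. int i - 1)"
      using L0 unfolding sA' .
    have sB': "(\<Sum>w\<in>{1..U}. B w) = (\<Sum>w\<in>{1..m}. m - (w - y)) + (\<Sum>w\<in>{m+1..U}. B w)"
      using sB B1 by simp
    have sw: "(\<Sum>w\<in>{1..U}. card {i\<in>{1..m}. nd X w \<le> m - i \<and> w \<le> y + i - 1}) = (\<Sum>w\<in>{1..U}. B w)"
      by (simp add: B_def)
    have R: "(\<Sum>i\<in>{1..m}. min (dmt_c X i) (int y))
       = int ((\<Sum>w\<in>{1..m}. m - (w - y)) + (\<Sum>w\<in>{m+1..U}. B w)) - (\<Sum>i\<in>{1..m}. int i - 1)"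
      unfolding RHS swap2 sw sB' ..
    have "dmt V 0 = (\<Sum>i\<in>{1..m}. min (dmt_c X i) (int y))"
      using L R arith_id[OF less_imp_le[OF ym]] by (simp only: of_nat_add of_nat_mult)
    then show ?thesis unfolding V_def m_def .
  qed
qed

lemma B:
  assumes len: "2 \<le> length X"
  shows "dmt (X @ [y]) 0 = Min ((\<lambda>j. dmt (map (\<lambda>x. x - j) X) 0 + dmt [j, y] 0) ` {0..nmin X})"
proof -
  have "dmt (X @ [y]) 0 = Min ((\<lambda>j. dmt X j + int j * int y) ` {0..nmin X})"
    using B1[OF len] B2[OF len] by simp
  also have "(\<lambda>j. dmt X j + int j * int y) ` {0..nmin X} = (\<lambda>j. dmt (map (\<lambda>x. x - j) X) 0 + dmt [j, y] 0) ` {0..nmin X}"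
    by (rule image_cong[OF refl]) (simp add: R1[OF len] F3)
  finally show ?thesis .
qed

lemma nmin_ge: "l \<noteq> [] \<Longrightarrow> (\<forall>x\<in>set l. k \<le> x) \<Longrightarrow> k \<le> nmin l"
  by (simp add: nmin_def)

lemma nmin_append: "X \<noteq> [] \<Longrightarrow> Y \<noteq> [] \<Longrightarrow> nmin (X @ Y) = min (nmin X) (nmin Y)"
  by (simp add: nmin_def Min_Un)

lemma nmin_Cons: "Y \<noteq> [] \<Longrightarrow> nmin (j # Y) = min j (nmin Y)"
  by (simp add: nmin_def)

lemma map_sub_comp: "t \<le> j \<Longrightarrow> map (\<lambda>x. x - (j - t)) (map (\<lambda>x::nat. x - t) X) = map (\<lambda>x. x - j) X"
  by auto

lemma map_sub_comp2: "map (\<lambda>x. x - j') (map (\<lambda>x::nat. x - t) X) = map (\<lambda>x. x - (j' + t)) X"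
  by auto

lemma star_aux:
  "length Y = n \<Longrightarrow> 2 \<le> length X \<Longrightarrow> Y \<noteq> [] \<Longrightarrow>
   dmt (X @ Y) 0 = Min ((\<lambda>j. dmt (map (\<lambda>x. x - j) X) 0 + dmt (j # Y) 0) ` {0..nmin X})"
proof (induction n arbitrary: X Y rule: less_induct)
  case (less n X Y0)
  obtain Y' y where Y0: "Y0 = Y' @ [y]" using less.prems(3) by (metis rev_exhaust)
  have snocprems: "2 \<le> length X" using less.prems by auto
  have IHg: "\<And>X Y. length Y < n \<Longrightarrow> 2 \<le> length X \<Longrightarrow> Y \<noteq> [] \<Longrightarrow>
     dmt (X @ Y) 0 = Min ((\<lambda>j. dmt (map (\<lambda>x. x - j) X) 0 + dmt (j # Y) 0) ` {0..nmin X})"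
    using less.IH by blast
  have lY: "length Y' < n" using less.prems(1) Y0 by simp
  have "dmt (X @ Y' @ [y]) 0 = Min ((\<lambda>j. dmt (map (\<lambda>x. x - j) X) 0 + dmt (j # Y' @ [y]) 0) ` {0..nmin X})"
  proof (cases "Y' = []")
    case True then show ?thesis using B[OF snocprems] by simp
  next
    case False
    define mX where "mX = nmin X"
    define mY where "mY = nmin Y'"
    have Xne: "X \<noteq> []" using snocprems by auto
    have lenXY: "2 \<le> length (X @ Y')" using snocprems by simp
    have nXY: "nmin (X @ Y') = min mX mY" using nmin_append[OF Xne False] by (simp add: mX_def mY_def)
    have LHS: "dmt (X @ Y' @ [y]) 0 = Min ((\<lambda>t. dmt (map (\<lambda>x. x - t) (X @ Y')) 0 + dmt [t,y] 0) ` {0..min mX mY})"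
      using B[OF lenXY, of y] nXY by simp
    have IH: "dmt (map (\<lambda>x. x - t) (X @ Y')) 0
        = Min ((\<lambda>j'. dmt (map (\<lambda>x. x - j') (map (\<lambda>x. x - t) X)) 0 + dmt (j' # map (\<lambda>x. x - t) Y') 0) ` {0..mX - t})" for t
      using IHg[of "map (\<lambda>x. x - t) Y'" "map (\<lambda>x. x - t) X"] lY False snocprems nmin_map[OF Xne, of t] by (simp add: mX_def)
    have RHSin: "dmt (j # Y' @ [y]) 0 = Min ((\<lambda>t. dmt (map (\<lambda>x. x - t) (j # Y')) 0 + dmt [t,y] 0) ` {0..min j mY})" for j
    proof -
      have "Suc 0 \<le> length Y'" using False by (cases Y') auto
      then show ?thesis using B[of "j # Y'" y] nmin_Cons[OF False, of j] by (simp add: mY_def)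
    qed
    define f where "f t = Min ((\<lambda>j'. dmt (map (\<lambda>x. x - j') (map (\<lambda>x. x - t) X)) 0 + dmt (j' # map (\<lambda>x. x - t) Y') 0) ` {0..mX - t}) + dmt [t,y] 0" for t
    define g where "g j = dmt (map (\<lambda>x. x - j) X) 0 + Min ((\<lambda>t. dmt (map (\<lambda>x. x - t) (j # Y')) 0 + dmt [t,y] 0) ` {0..min j mY})" for j
    have "Min (f ` {0..min mX mY}) = Min (g ` {0..mX})"
    proof (rule Min_eq_by)
      show "finite {0..min mX mY}" "{0..min mX mY} \<noteq> {}" "finite {0..mX}" "{0..mX} \<noteq> {}" by auto
    next
      fix t assume t: "t \<in> {0..min mX mY}"
      define S where "S = (\<lambda>j'. dmt (map (\<lambda>x. x - j') (map (\<lambda>x. x - t) X)) 0 + dmt (j' # map (\<lambda>x. x - t) Y') 0) ` {0..mX - t}"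
      have "Min S \<in> S" unfolding S_def by (intro Min_in) auto
      then obtain j' where j'2: "Min S = dmt (map (\<lambda>x. x - j') (map (\<lambda>x. x - t) X)) 0 + dmt (j' # map (\<lambda>x. x - t) Y') 0"
          and j'1: "j' \<in> {0..mX - t}"
        unfolding S_def by (rule imageE)
      have j': "j' \<le> mX - t" "Min S = dmt (map (\<lambda>x. x - j') (map (\<lambda>x. x - t) X)) 0 + dmt (j' # map (\<lambda>x. x - t) Y') 0"
        using j'1 j'2 by auto
      define j where "j = j' + t"
      have jB: "j \<in> {0..mX}" using j' t by (auto simp: j_def)
      have "g j \<le> dmt (map (\<lambda>x. x - j) X) 0 + (dmt (map (\<lambda>x. x - t) (j # Y')) 0 + dmt [t,y] 0)"
      proof -
        have mem1: "dmt (map (\<lambda>x. x - t) (j # Y')) 0 + dmt [t,y] 0 \<in> (\<lambda>t. dmt (map (\<lambda>x. x - t) (j # Y')) 0 + dmt [t,y] 0) ` {0..min j mY}"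
          by (rule image_eqI[where x=t]) (use t in \<open>auto simp: j_def\<close>)
        show ?thesis unfolding g_def by (intro add_left_mono Min_le[OF _ mem1]) auto
      qed
      also have "\<dots> = f t"
      proof -
        have fS: "f t = Min S + dmt [t,y] 0" by (simp add: f_def S_def)
        show ?thesis unfolding fS j'(2) map_sub_comp2 by (simp add: j_def)
      qed
      finally show "\<exists>b\<in>{0..mX}. g b \<le> f t" using jB by blast
    next
      fix j assume j: "j \<in> {0..mX}"
      define S where "S = (\<lambda>t. dmt (map (\<lambda>x. x - t) (j # Y')) 0 + dmt [t,y] 0) ` {0..min j mY}"
      have "Min S \<in> S" unfolding S_def by (intro Min_in) auto
      then obtain t where t2: "Min S = dmt (map (\<lambda>x. x - t) (j # Y')) 0 + dmt [t,y] 0"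
          and t1: "t \<in> {0..min j mY}"
        unfolding S_def by (rule imageE)
      have t: "t \<le> min j mY" "Min S = dmt (map (\<lambda>x. x - t) (j # Y')) 0 + dmt [t,y] 0"
        using t1 t2 by auto
      have tA: "t \<in> {0..min mX mY}" using t j by auto
      have "f t \<le> (dmt (map (\<lambda>x. x - (j - t)) (map (\<lambda>x. x - t) X)) 0 + dmt ((j - t) # map (\<lambda>x. x - t) Y') 0) + dmt [t,y] 0"
      proof -
        have mem2: "dmt (map (\<lambda>x. x - (j - t)) (map (\<lambda>x. x - t) X)) 0 + dmt ((j - t) # map (\<lambda>x. x - t) Y') 0
           \<in> (\<lambda>j'. dmt (map (\<lambda>x. x - j') (map (\<lambda>x. x - t) X)) 0 + dmt (j' # map (\<lambda>x. x - t) Y') 0) ` {0..mX - t}"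
          by (rule image_eqI[where x="j - t"]) (use t j in auto)
        show ?thesis unfolding f_def by (intro add_right_mono Min_le[OF _ mem2]) auto
      qed
      also have "\<dots> = g j"
      proof -
        have gS: "g j = dmt (map (\<lambda>x. x - j) X) 0 + Min S" by (simp add: g_def S_def)
        have tj: "t \<le> j" using t(1) by simp
        show ?thesis unfolding gS t(2) map_sub_comp[OF tj] using tj by simp
      qed
      finally show "\<exists>a\<in>{0..min mX mY}. f a \<le> g j" using tA by blast
    qed
    then show ?thesis unfolding append_assoc LHS mX_def[symmetric] f_def g_def IH[symmetric] RHSin[symmetric] by simp
  qed
  then show ?case by (simp add: Y0)
qed

lemma star:
  assumes "2 \<le> length X" "Y \<noteq> []"
  shows "dmt (X @ Y) 0 = Min ((\<lambda>j. dmt (map (\<lambda>x. x - j) X) 0 + dmt (j # Y) 0) ` {0..nmin X})"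
  using star_aux[OF refl assms] .

lemma R3:
  assumes len: "3 \<le> length ns" and i: "i \<in> {1..length ns - 2}" and k: "k \<le> nmin ns"
  shows "dmt ns k = Min ((\<lambda>j. dmt (take (i+1) ns) j + dmt (j # drop (i+1) ns) k) ` {k..nmin (take (i+1) ns)})"
proof -
  define X where "X = take (i+1) ns"
  define Y where "Y = drop (i+1) ns"
  define mX where "mX = nmin X"
  have ns: "ns = X @ Y" by (simp add: X_def Y_def)
  have lenX: "2 \<le> length X" using len i by (simp add: X_def)
  have Yne: "Y \<noteq> []" using len i by (simp add: Y_def; arith)
  have lenns: "2 \<le> length ns" using len by simp
  have Xne: "X \<noteq> []" using lenX by auto
  have setX: "set X \<subseteq> set ns" and setY: "set Y \<subseteq> set ns"
    by (auto simp: X_def Y_def dest: in_set_takeD in_set_dropD)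
  have kX: "k \<le> mX" using nmin_in[OF Xne] setX k nmin_le[of _ ns] by (force simp: mX_def)
  have kY: "\<forall>x\<in>set Y. k \<le> x" using setY k nmin_le[of _ ns] by force
  have "dmt ns k = dmt (map (\<lambda>x. x - k) ns) 0" by (rule R1[OF lenns k])
  also have "\<dots> = dmt (map (\<lambda>x. x - k) X @ map (\<lambda>x. x - k) Y) 0" by (simp add: ns)
  also have "\<dots> = Min ((\<lambda>j'. dmt (map (\<lambda>x. x - j') (map (\<lambda>x. x - k) X)) 0 + dmt (j' # map (\<lambda>x. x - k) Y) 0) ` {0..mX - k})"
    using star[of "map (\<lambda>x. x - k) X" "map (\<lambda>x. x - k) Y"] lenX Yne nmin_map[OF Xne, of k] by (simp add: mX_def)
  also have "\<dots> = Min ((\<lambda>j. dmt X j + dmt (j # Y) k) ` {k..mX})"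
  proof (rule Min_eq_by)
    show "finite {0..mX - k}" "{0..mX - k} \<noteq> {}" "finite {k..mX}" "{k..mX} \<noteq> {}" using kX by auto
  next
    have eq: "dmt X j + dmt (j # Y) k = dmt (map (\<lambda>x. x - (j - k)) (map (\<lambda>x. x - k) X)) 0 + dmt ((j - k) # map (\<lambda>x. x - k) Y) 0"
      if j: "j \<in> {k..mX}" for j
    proof -
      have "dmt X j = dmt (map (\<lambda>x. x - j) X) 0" using j by (intro R1[OF lenX]) (auto simp: mX_def)
      moreover have "k \<le> nmin (j # Y)" using j kY by (intro nmin_ge) auto
      then have "dmt (j # Y) k = dmt (map (\<lambda>x. x - k) (j # Y)) 0" using Yne by (intro R1) (auto simp: Suc_le_eq)
      moreover have kj: "k \<le> j" using j by simp
      ultimately show ?thesis unfolding map_sub_comp[OF kj] by simp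
    qed
    {
      fix a assume a: "a \<in> {0..mX - k}"
      then have "a + k \<in> {k..mX}" using kX by auto
      moreover have "(a + k) - k = a" by simp
      ultimately show "\<exists>b\<in>{k..mX}. dmt X b + dmt (b # Y) k \<le> dmt (map (\<lambda>x. x - a) (map (\<lambda>x. x - k) X)) 0 + dmt (a # map (\<lambda>x. x - k) Y) 0"
        using eq by (metis order_refl)
    }
    {
      fix b assume b: "b \<in> {k..mX}"
      then have "b - k \<in> {0..mX - k}" by auto
      then show "\<exists>a\<in>{0..mX - k}. dmt (map (\<lambda>x. x - a) (map (\<lambda>x. x - k) X)) 0 + dmt (a # map (\<lambda>x. x - k) Y) 0 \<le> dmt X b + dmt (b # Y) k"
        using eq[OF b] by (metis order_refl)
    }
  qed
  finally show ?thesis by (simp add: X_def Y_def mX_def)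
qed

theorem theorem5:
  fixes ns :: "nat list"
  assumes len: "length ns \<ge> 3"
    and pos: "\<forall>x\<in>set ns. x > 0"
  shows "(\<forall>k\<le>nmin ns. dmt ns k = dmt (map (\<lambda>x. x - k) ns) 0)
    \<and> (\<forall>i\<in>{1..length ns - 2}.
         dmt ns 0 = Min ((\<lambda>j. dmt (take (i+1) ns) j + dmt (j # drop (i+1) ns) 0)
                          ` {0..nmin (take (i+1) ns)}))
    \<and> (\<forall>i\<in>{1..length ns - 2}. \<forall>k\<le>nmin ns.
         dmt ns k = Min ((\<lambda>j. dmt (take (i+1) ns) j + dmt (j # drop (i+1) ns) k)
                          ` {k..nmin (take (i+1) ns)}))"
proof (intro conjI allI impI ballI)
  fix k assume "k \<le> nmin ns"
  then show "dmt ns k = dmt (map (\<lambda>x. x - k) ns) 0" using len by (intro R1) auto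
next
  fix i assume "i \<in> {1..length ns - 2}"
  then show "dmt ns 0 = Min ((\<lambda>j. dmt (take (i+1) ns) j + dmt (j # drop (i+1) ns) 0) ` {0..nmin (take (i+1) ns)})"
    using R3[OF len, of i 0] by simp
next
  fix i k assume "i \<in> {1..length ns - 2}" "k \<le> nmin ns"
  then show "dmt ns k = Min ((\<lambda>j. dmt (take (i+1) ns) j + dmt (j # drop (i+1) ns) k) ` {k..nmin (take (i+1) ns)})"
    using R3[OF len] by blast
qed

end
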